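(* Let $H$ be a non-zero real constant. Let $J\subset(0,\infty)$ be an open interval and $u:J\to\mathbb{R}$ a smooth function with $u'(\alpha)\neq0$ on $J$. Consider the rotational surface $\bar f(\alpha,v)=(\alpha\cos v,\ \alpha\sin v,\ u(\alpha))$ in $(\mathbb{R}^3,\|\cdot\|)$, oriented so that the horizontal component $(\eta_1,\eta_2)$ of its Birkhoff–Gauss map $\eta$ at $\bar f(\alpha,v)$ is a positive multiple of $-(\cos v,\sin v)$ (i.e. points toward the $x_3$-axis; equivalently, $\nabla\Phi(\eta)$ is a positive multiple of $f_u\times f_v$ for the height parametrization $f(u,v)=(\alpha(u)\cos v,\alpha(u)\sin v,u)$, $\alpha$ the local inverse of $u$). Then this surface has constant Minkowski mean curvature $H$ if and only if there are a constant $c_1$ and a fixed sign such that, for all $\alpha\in J$, $c_1-H\alpha^2>0$, $\alpha^{2m}>(c_1-H\alpha^2)^{2m}$, and $$u'(\alpha)=\pm\frac{(c_1-H\alpha^2)^{2m-1}}{\left\{\alpha^{2m}-(c_1-H\alpha^2)^{2m}\right\}^{\frac{2m-1}{2m}}},$$ i.e. $u(\alpha)=\pm\int\frac{(c_1-H\alpha^2)^{2m-1}}{\{\alpha^{2m}-(c_1-H\alpha^2)^{2m}\}^{\frac{2m-1}{2m}}}\,d\alpha$.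
   Context: Fix an integer $m\ge 2$. Let $\Phi(x_1,x_2,x_3)=(x_1^2+x_2^2)^m+x_3^{2m}$ and let $\|\cdot\|$ be the norm on $\mathbb{R}^3$ whose unit sphere is $S=\{x\in\mathbb{R}^3:\Phi(x)=1\}$ (a smooth, strictly convex surface). For a surface given by a parametrization $f(s,v)$, its Birkhoff–Gauss map $\eta$ is the map into $S$ defined by requiring $\eta\in S$ and $\nabla\Phi(\eta)=\mu\, f_s\times f_v$ for some function $\mu>0$, where $\times$ is the standard cross product (so the tangent plane of $S$ at $\eta(p)$ is parallel to $T_pM$, and $d\eta_p$ is an endomorphism of $T_pM$). The Minkowski mean curvature is $H=\tfrac12\operatorname{trace}(d\eta_p)$; its sign changes when the orientation is reversed. *)

theory Defs
  imports "HOL-Analysis.Analysis" "HOL-Analysis.Cross3"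
begin

text \<open>The gauge Phi(x) = (x1^2+x2^2)^m + x3^(2m); its unit level set is the unit
sphere S of the Minkowski norm.\<close>
definition Phi :: "nat \<Rightarrow> real^3 \<Rightarrow> real" where
  "Phi m x = ((x$1)^2 + (x$2)^2)^m + (x$3)^(2*m)"

definition gradPhi :: "nat \<Rightarrow> real^3 \<Rightarrow> real^3" where
  "gradPhi m x = vector
     [ 2 * real m * ((x$1)^2 + (x$2)^2)^(m - 1) * x$1,
       2 * real m * ((x$1)^2 + (x$2)^2)^(m - 1) * x$2,
       2 * real m * (x$3)^(2*m - 1) ]"

text \<open>e is the Birkhoff-Gauss image for the (oriented) normal N:
 e in S and grad Phi(e) = mu * N with mu > 0.\<close>
definition bg_point :: "nat \<Rightarrow> real^3 \<Rightarrow> real^3 \<Rightarrow> bool" where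
  "bg_point m N e \<longleftrightarrow> Phi m e = 1 \<and> (\<exists>\<mu>>0. gradPhi m e = \<mu> *\<^sub>R N)"

definition fbar :: "(real \<Rightarrow> real) \<Rightarrow> real \<times> real \<Rightarrow> real^3" where
  "fbar u p = vector [fst p * cos (snd p), fst p * sin (snd p), u (fst p)]"

definition rot_normal :: "(real \<Rightarrow> real) \<Rightarrow> real \<times> real \<Rightarrow> real^3" where
  "rot_normal u p = cross3
      (vector_derivative (\<lambda>a. fbar u (a, snd p)) (at (fst p)))
      (vector_derivative (\<lambda>w. fbar u (fst p, w)) (at (snd p)))"

definition rot_eta :: "nat \<Rightarrow> (real \<Rightarrow> real) \<Rightarrow> real \<times> real \<Rightarrow> real^3" where
  "rot_eta m u p = (THE e.
      (bg_point m (rot_normal u p) e \<or> bg_point m (- rot_normal u p) e) \<and>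
      (\<exists>l>0. e$1 = - l * cos (snd p) \<and> e$2 = - l * sin (snd p)))"

text \<open>Minkowski mean curvature Hv at parameter p of the surface f with Birkhoff-Gauss map
eta: H = 1/2 trace(d eta_p), where d eta_p is the endomorphism of T_pM sending
f_s to eta_s and f_v to eta_v.\<close>
definition mink_mean_curv ::
  "(real \<times> real \<Rightarrow> real^3) \<Rightarrow> (real \<times> real \<Rightarrow> real^3) \<Rightarrow> real \<times> real \<Rightarrow> real \<Rightarrow> bool" where
  "mink_mean_curv f eta p Hv \<longleftrightarrow>
     (\<exists>Df Deta a11 a12 a21 a22.
        (f has_derivative Df) (at p) \<and> (eta has_derivative Deta) (at p) \<and>
        Deta (1,0) = a11 *\<^sub>R Df (1,0) + a21 *\<^sub>R Df (0,1) \<and>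
        Deta (0,1) = a12 *\<^sub>R Df (1,0) + a22 *\<^sub>R Df (0,1) \<and>
        Hv = (a11 + a22) / 2)"

end

theory Submission
  imports Defs
begin

definition Qsol :: "nat \<Rightarrow> real \<Rightarrow> real \<Rightarrow> real \<Rightarrow> bool" where
  "Qsol m d l e \<longleftrightarrow> l > 0 \<and> l^(2*m) + e^(2*m) = 1 \<and> e^(2*m-1) * d = l^(2*m-1)"

lemma pow_aux: "m \<ge> 1 \<Longrightarrow> ((l::real)^2)^(m-1) * l = l^(2*m-1)"
proof -
  assume "m \<ge> 1"
  then obtain k where k: "m = Suc k" by (cases m) auto
  show ?thesis by (simp add: k power_mult[symmetric] mult.commute)
qed

lemma charB:
  fixes e :: "real^3"
  assumes m: "m \<ge> 1" and x: "x > 0" and d: "d \<noteq> 0"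
    and N: "N = vector [- x * d * cos v, - x * d * sin v, x]"
  shows "((bg_point m N e \<or> bg_point m (-N) e) \<and> (\<exists>l>0. e$1 = - l * cos v \<and> e$2 = - l * sin v))
     \<longleftrightarrow> (\<exists>l. e = vector [- l * cos v, - l * sin v, e$3] \<and> Qsol m d l (e$3))"
proof
  assume A: "(bg_point m N e \<or> bg_point m (-N) e) \<and> (\<exists>l>0. e$1 = - l * cos v \<and> e$2 = - l * sin v)"
  then obtain l where l: "l > 0" "e$1 = - l * cos v" "e$2 = - l * sin v" by blast
  have r: "(e$1)^2 + (e$2)^2 = l^2"
    using l by (simp add: power_mult_distrib algebra_simps flip: distrib_left)
  have ev: "e = vector [- l * cos v, - l * sin v, e$3]"
    using l by (simp add: vec_eq_iff forall_3 vector_3)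
  have r2: "(l * cos v)^2 + (l * sin v)^2 = l^2"
    by (simp add: power_mult_distrib flip: distrib_left)
  define K where "K = 2 * real m * l^(2*m-1)"
  have g1: "gradPhi m e $ 1 = - K * cos v" and g2: "gradPhi m e $ 2 = - K * sin v"
    and g3: "gradPhi m e $ 3 = 2 * real m * (e$3)^(2*m-1)"
    unfolding gradPhi_def K_def using pow_aux[OF m, of l] by (simp_all add: vector_3 r2 l)
  from A have ph: "Phi m e = 1" by (auto simp: bg_point_def)
  hence "l^(2*m) + (e$3)^(2*m) = 1" unfolding Phi_def by (simp add: r power_mult)
  moreover have "(e$3)^(2*m-1) * d = l^(2*m-1)"
  proof -
    obtain \<mu> \<sigma> where mu: "\<mu> > 0" "\<sigma> \<in> {-1,1}" "gradPhi m e = (\<sigma> * \<mu>) *\<^sub>R N"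
    proof -
      from A have "bg_point m N e \<or> bg_point m (-N) e" by blast
      thus ?thesis
      proof
        assume "bg_point m N e"
        then obtain \<mu> where "\<mu> > 0" "gradPhi m e = \<mu> *\<^sub>R N" unfolding bg_point_def by blast
        thus ?thesis using that[of \<mu> 1] by simp
      next
        assume "bg_point m (-N) e"
        then obtain \<mu> where "\<mu> > 0" "gradPhi m e = \<mu> *\<^sub>R (-N)" unfolding bg_point_def by blast
        thus ?thesis using that[of \<mu> "-1"] by simp
      qed
    qed
    have c1: "- K * cos v = \<sigma> * \<mu> * (- x * d * cos v)" and c2: "- K * sin v = \<sigma> * \<mu> * (- x * d * sin v)"
      and c3: "2 * real m * (e$3)^(2*m-1) = \<sigma> * \<mu> * x"
      using mu(3) g1 g2 g3 N by (auto simp: vec_eq_iff forall_3 vector_3)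
    have s1: "(- K * cos v) * (- cos v) + (- K * sin v) * (- sin v) = K * ((cos v)^2 + (sin v)^2)" by algebra
    have s2: "(\<sigma> * \<mu> * (- x * d * cos v)) * (- cos v) + (\<sigma> * \<mu> * (- x * d * sin v)) * (- sin v) = \<sigma> * \<mu> * x * d * ((cos v)^2 + (sin v)^2)" by algebra
    have "K = \<sigma> * \<mu> * x * d" using s1 s2 unfolding c1 c2 by simp
    hence "2 * real m * ((e$3)^(2*m-1) * d) = 2 * real m * l^(2*m-1)" using c3 K_def by (metis mult.assoc)
    thus ?thesis using m by simp
  qed
  ultimately show "\<exists>l. e = vector [- l * cos v, - l * sin v, e$3] \<and> Qsol m d l (e$3)"
    using ev l(1) unfolding Qsol_def by blast
next
  assume "\<exists>l. e = vector [- l * cos v, - l * sin v, e$3] \<and> Qsol m d l (e$3)"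
  then obtain l where ev: "e = vector [- l * cos v, - l * sin v, e$3]" and q: "Qsol m d l (e$3)" by blast
  have l: "l > 0" "e$1 = - l * cos v" "e$2 = - l * sin v" using q ev unfolding Qsol_def
    by (metis vector_3)+
  have r: "(e$1)^2 + (e$2)^2 = l^2"
    using l by (simp add: power_mult_distrib algebra_simps flip: distrib_left)
  have r2: "(l * cos v)^2 + (l * sin v)^2 = l^2"
    by (simp add: power_mult_distrib flip: distrib_left)
  define K where "K = 2 * real m * l^(2*m-1)"
  have Kp: "K > 0" using l m by (simp add: K_def)
  have g1: "gradPhi m e $ 1 = - K * cos v" and g2: "gradPhi m e $ 2 = - K * sin v"
    and g3: "gradPhi m e $ 3 = 2 * real m * (e$3)^(2*m-1)"
    unfolding gradPhi_def K_def using pow_aux[OF m, of l] by (simp_all add: vector_3 r2 l)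
  have ph: "Phi m e = 1" using q unfolding Phi_def Qsol_def by (simp add: r power_mult)
  have e3: "(e$3)^(2*m-1) * d = l^(2*m-1)" using q Qsol_def by blast
  define \<mu> where "\<mu> = K / (x * d)"
  have G: "gradPhi m e = \<mu> *\<^sub>R N"
  proof -
    have "2 * real m * (e$3)^(2*m-1) = \<mu> * x"
      using e3 d x unfolding \<mu>_def K_def by (simp add: field_simps)
    thus ?thesis using g1 g2 g3 d x unfolding N \<mu>_def
      by (simp add: vec_eq_iff forall_3 vector_3)
  qed
  show "(bg_point m N e \<or> bg_point m (-N) e) \<and> (\<exists>l>0. e$1 = - l * cos v \<and> e$2 = - l * sin v)"
  proof (cases "d > 0")
    case True
    hence "\<mu> > 0" using Kp x by (simp add: \<mu>_def)
    thus ?thesis using G ph l unfolding bg_point_def by blast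
  next
    case False
    hence "- \<mu> > 0" using Kp x d by (simp add: \<mu>_def divide_pos_neg mult_pos_neg)
    moreover have "gradPhi m e = (- \<mu>) *\<^sub>R (- N)" using G by simp
    ultimately show ?thesis using ph l unfolding bg_point_def by blast
  qed
qed

lemma odd2m: "(m::nat) \<ge> 1 \<Longrightarrow> odd (2*m-1)" by (cases m) auto

lemma Qsol_t:
  assumes m: "m \<ge> 1" and q: "Qsol m d l e"
  shows "e = (e / l) * l" "(e/l)^(2*m-1) = 1/d" "l^(2*m) * (1 + (e/l)^(2*m)) = 1" "d \<noteq> 0"
proof -
  from q have l: "l > 0" and s: "l^(2*m) + e^(2*m) = 1" and p: "e^(2*m-1) * d = l^(2*m-1)"
    unfolding Qsol_def by auto
  show "e = (e / l) * l" using l by simp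
  have lp: "l^(2*m-1) > 0" using l by simp
  show d: "d \<noteq> 0"
  proof
    assume "d = 0" hence "l^(2*m-1) = 0" using p by simp
    thus False using lp by linarith
  qed
  show "(e/l)^(2*m-1) = 1/d" using p lp d l by (simp add: power_divide field_simps)
  show "l^(2*m) * (1 + (e/l)^(2*m)) = 1" using s l by (simp add: power_divide field_simps)
qed

lemma Qsol_uniq:
  assumes m: "m \<ge> 1" and q: "Qsol m d l e" and q': "Qsol m d l' e'"
  shows "l = l' \<and> e = e'"
proof -
  note A = Qsol_t[OF m q] and B = Qsol_t[OF m q']
  have "e/l = e'/l'"
    using odd_real_root_power_cancel[OF odd2m[OF m], of "e/l"] odd_real_root_power_cancel[OF odd2m[OF m], of "e'/l'"]
      A(2) B(2) by simp
  moreover have "l^(2*m) = l'^(2*m)"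
  proof -
    have T: "1 + (e/l)^(2*m) > 0" by (simp add: add_pos_nonneg zero_le_even_power)
    have "(l^(2*m) - l'^(2*m)) * (1 + (e/l)^(2*m)) = 0" using A(3) B(3) calculation by (simp add: left_diff_distrib)
    thus ?thesis using T by simp
  qed
  moreover have "l = l'"
    apply (rule power_eq_imp_eq_base[OF calculation(2)])
    using q q' m unfolding Qsol_def by auto
  ultimately show ?thesis using A(1) B(1) by (metis)
qed

lemma Qsol_ex:
  assumes m: "m \<ge> 1" and d: "d \<noteq> 0"
  shows "\<exists>l e. Qsol m d l e"
proof -
  define t where "t = root (2*m-1) (1/d)"
  have t: "t^(2*m-1) = 1/d" unfolding t_def using odd_real_root_pow[OF odd2m[OF m]] by simp
  have pos: "1 + t^(2*m) > 0" by (simp add: add_pos_nonneg zero_le_even_power)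
  define l where "l = root (2*m) (1 / (1 + t^(2*m)))"
  have l: "l > 0" unfolding l_def using pos m by (simp add: real_root_gt_zero)
  have l2: "l^(2*m) = 1 / (1 + t^(2*m))" unfolding l_def using pos m by (simp add: real_root_pow_pos2)
  have "Qsol m d l (t*l)"
    unfolding Qsol_def
  proof (intro conjI l)
    show "l^(2*m) + (t*l)^(2*m) = 1" using l2 pos by (simp add: power_mult_distrib field_simps)
    show "(t*l)^(2*m-1) * d = l^(2*m-1)" using t d by (simp add: power_mult_distrib)
  qed
  thus ?thesis by blast
qed

lemma vec3_decomp: "vector [a, b, c] = a *\<^sub>R (axis 1 1 :: real^3) + b *\<^sub>R axis 2 1 + c *\<^sub>R axis 3 1"
  by (simp add: vec_eq_iff forall_3 axis_def vector_3)

lemma fbar_decomp: "fbar u (a, w) = (a * cos w) *\<^sub>R (axis 1 1 :: real^3) + (a * sin w) *\<^sub>R axis 2 1 + u a *\<^sub>R axis 3 1"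
  unfolding fbar_def by (simp add: vec3_decomp)

lemma vd1:
  assumes "(u has_real_derivative d) (at x)"
  shows "((\<lambda>a. fbar u (a, w)) has_vector_derivative vector [cos w, sin w, d]) (at x)"
  unfolding fbar_decomp vec3_decomp
  by (rule derivative_eq_intros assms refl | simp)+

lemma vd2:
  shows "((\<lambda>w. fbar u (x, w)) has_vector_derivative vector [- x * sin w, x * cos w, 0]) (at w)"
  unfolding fbar_decomp vec3_decomp
  by (rule derivative_eq_intros refl | simp add: mult.commute)+

lemma rot_normal_eq:
  assumes "(u has_real_derivative d) (at x)"
  shows "rot_normal u (x, v) = vector [- x * d * cos v, - x * d * sin v, x]"
  unfolding rot_normal_def using vector_derivative_at[OF vd1[OF assms]] vector_derivative_at[OF vd2]
  apply simp
  apply (simp add: cross3_def vector_3 vec_eq_iff forall_3 algebra_simps power2_eq_square[symmetric])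
  by (simp flip: distrib_left)

definition LE :: "nat \<Rightarrow> real \<Rightarrow> real \<times> real" where
  "LE m d = (THE p. Qsol m d (fst p) (snd p))"

lemma LE_Q:
  assumes "m \<ge> 1" "d \<noteq> 0"
  shows "Qsol m d (fst (LE m d)) (snd (LE m d))"
proof -
  have "\<exists>!p. Qsol m d (fst p) (snd p)"
  proof -
    obtain l e where "Qsol m d l e" using Qsol_ex[OF assms] by blast
    moreover have "\<And>p. Qsol m d (fst p) (snd p) \<Longrightarrow> p = (l, e)"
      using Qsol_uniq[OF assms(1) calculation] by (metis prod.collapse)
    ultimately show ?thesis by (metis fst_conv snd_conv)
  qed
  thus ?thesis unfolding LE_def by (rule theI')
qed

lemma rot_eta_eq:
  assumes m: "m \<ge> 1" and x: "x > 0" and du: "(u has_real_derivative d) (at x)" and d: "d \<noteq> 0"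
  shows "rot_eta m u (x, v) = vector [- fst (LE m d) * cos v, - fst (LE m d) * sin v, snd (LE m d)]"
proof -
  let ?T = "vector [- fst (LE m d) * cos v, - fst (LE m d) * sin v, snd (LE m d)] :: real^3"
  note ch = charB[OF m x d rot_normal_eq[OF du, of v]]
  show ?thesis
    unfolding rot_eta_def snd_conv
  proof (rule the_equality)
    show "(bg_point m (rot_normal u (x, v)) ?T \<or> bg_point m (- rot_normal u (x, v)) ?T) \<and>
          (\<exists>l>0. ?T $ 1 = - l * cos v \<and> ?T $ 2 = - l * sin v)"
      unfolding ch using LE_Q[OF m d] by (auto simp: vector_3)
  next
    fix e assume "(bg_point m (rot_normal u (x, v)) e \<or> bg_point m (- rot_normal u (x, v)) e) \<and>
          (\<exists>l>0. e $ 1 = - l * cos v \<and> e $ 2 = - l * sin v)"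
    then obtain l where l: "e = vector [- l * cos v, - l * sin v, e$3]" "Qsol m d l (e$3)" unfolding ch by blast
    from Qsol_uniq[OF m l(2) LE_Q[OF m d]] l(1) show "e = ?T" by simp
  qed
qed

lemma hcomp:
  assumes "(f has_real_derivative D) (at (fst p))"
  shows "((\<lambda>p. f (fst p)) has_derivative (\<lambda>q. D * fst q)) (at p)"
  using has_derivative_compose[OF has_derivative_fst[OF has_derivative_ident] assms[unfolded has_field_derivative_def]]
  by simp

lemma fbar_hasderiv:
  assumes "(u has_real_derivative d) (at x)"
  shows "(fbar u has_derivative (\<lambda>q. vector [fst q * cos v - x * sin v * snd q, fst q * sin v + x * cos v * snd q, d * fst q])) (at (x, v))"
proof -
  have e: "fbar u = (\<lambda>p. (fst p * cos (snd p)) *\<^sub>R (axis 1 1 :: real^3) + (fst p * sin (snd p)) *\<^sub>R axis 2 1 + u (fst p) *\<^sub>R axis 3 1)"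
    by (rule ext, metis fbar_decomp prod.collapse)
  have hu: "((\<lambda>p. u (fst p)) has_derivative (\<lambda>q. d * fst q)) (at (x, v))"
    using hcomp[of u d "(x,v)"] assms by simp
  show ?thesis unfolding e vec3_decomp
    apply (rule has_derivative_eq_rhs)
     apply (rule derivative_eq_intros hu refl | simp)+
    by (rule ext) (simp add: algebra_simps)
qed

lemma G_hasderiv:
  assumes L: "(Lf has_real_derivative L') (at x)" and E: "(Ef has_real_derivative E') (at x)"
  shows "((\<lambda>p. vector [- Lf (fst p) * cos (snd p), - Lf (fst p) * sin (snd p), Ef (fst p)] :: real^3) has_derivative
     (\<lambda>q. vector [- L' * fst q * cos v + Lf x * sin v * snd q, - L' * fst q * sin v - Lf x * cos v * snd q, E' * fst q])) (at (x, v))"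
proof -
  have hL: "((\<lambda>p. Lf (fst p)) has_derivative (\<lambda>q. L' * fst q)) (at (x, v))"
    using hcomp[of Lf L' "(x,v)"] L by simp
  have hE: "((\<lambda>p. Ef (fst p)) has_derivative (\<lambda>q. E' * fst q)) (at (x, v))"
    using hcomp[of Ef E' "(x,v)"] E by simp
  show ?thesis unfolding vec3_decomp
    apply (rule has_derivative_eq_rhs)
     apply (rule derivative_eq_intros hL hE refl | simp)+
    by (rule ext) (simp add: algebra_simps)
qed

definition Lf :: "nat \<Rightarrow> (real \<Rightarrow> real) \<Rightarrow> real \<Rightarrow> real" where
  "Lf m u a = fst (LE m (deriv u a))"
definition Ef :: "nat \<Rightarrow> (real \<Rightarrow> real) \<Rightarrow> real \<Rightarrow> real" where
  "Ef m u a = snd (LE m (deriv u a))"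

lemma rot_eta_J:
  assumes m: "m \<ge> 1" and J: "J \<subseteq> {0<..}" and hu: "\<forall>a\<in>J. (u has_real_derivative deriv u a) (at a)"
    and hd: "\<forall>a\<in>J. deriv u a \<noteq> 0" and a: "a \<in> J"
  shows "rot_eta m u (a, w) = vector [- Lf m u a * cos w, - Lf m u a * sin w, Ef m u a]"
    "Qsol m (deriv u a) (Lf m u a) (Ef m u a)"
  using rot_eta_eq[OF m _ hu[rule_format, OF a] hd[rule_format, OF a]] LE_Q[OF m hd[rule_format, OF a]] a J
  unfolding Lf_def Ef_def by auto

lemma BL:
  assumes m: "m \<ge> 1" and oJ: "open J" and J: "J \<subseteq> {0<..}" and hu: "\<forall>a\<in>J. (u has_real_derivative deriv u a) (at a)"
    and hd: "\<forall>a\<in>J. deriv u a \<noteq> 0" and x: "x \<in> J"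
    and L: "(Lf m u has_real_derivative L') (at x)" and E: "(Ef m u has_real_derivative E') (at x)"
  shows "mink_mean_curv (fbar u) (rot_eta m u) (x, v) ((- L' - Lf m u x / x) / 2)"
proof -
  note RJ = rot_eta_J[OF m J hu hd]
  have xp: "x > 0" using x J by auto
  define d where "d = deriv u x"
  have Df: "(fbar u has_derivative (\<lambda>q. vector [fst q * cos v - x * sin v * snd q, fst q * sin v + x * cos v * snd q, d * fst q])) (at (x, v))"
    using fbar_hasderiv[of u d x v] hu x d_def by auto
  have Deta: "(rot_eta m u has_derivative (\<lambda>q. vector [- L' * fst q * cos v + Lf m u x * sin v * snd q, - L' * fst q * sin v - Lf m u x * cos v * snd q, E' * fst q])) (at (x, v))"
  proof (rule has_derivative_transform_within_open[OF G_hasderiv[OF L E]])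
    show "open (J \<times> (UNIV::real set))" using oJ by (simp add: open_Times)
    show "(x, v) \<in> J \<times> UNIV" using x by simp
    fix p :: "real \<times> real" assume "p \<in> J \<times> UNIV"
    thus "vector [- Lf m u (fst p) * cos (snd p), - Lf m u (fst p) * sin (snd p), Ef m u (fst p)] = rot_eta m u p"
      using RJ(1)[of "fst p" "snd p"] by auto
  qed
  have Q: "Qsol m d (Lf m u x) (Ef m u x)" using RJ(2)[OF x] d_def by simp
  have EE: "E' = - L' * d"
  proof -
    have D1: "((\<lambda>a. Lf m u a ^ (2*m) + Ef m u a ^ (2*m)) has_real_derivative
        (real (2*m) * Lf m u x ^ (2*m-1) * L' + real (2*m) * Ef m u x ^ (2*m-1) * E')) (at x)"
      by (rule derivative_eq_intros L E refl | simp)+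
    have D0: "((\<lambda>a. Lf m u a ^ (2*m) + Ef m u a ^ (2*m)) has_real_derivative 0) (at x)"
      apply (rule has_field_derivative_transform_within_open[OF DERIV_const oJ x])
      using RJ(2) unfolding Qsol_def by auto
    have z: "real (2*m) * Lf m u x ^ (2*m-1) * L' + real (2*m) * Ef m u x ^ (2*m-1) * E' = 0"
      using DERIV_unique[OF D1 D0] .
    have q: "Ef m u x ^ (2*m-1) * d = Lf m u x ^ (2*m-1)" "Lf m u x > 0" using Q unfolding Qsol_def by auto
    hence "Ef m u x ^ (2*m-1) \<noteq> 0" by (metis mult_eq_0_iff power_not_zero less_irrefl)
    moreover have "real (2*m) * (Ef m u x ^ (2*m-1) * (E' + L' * d)) = 0"
      using z q(1) by (simp add: algebra_simps)
    ultimately show ?thesis using m by simp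
  qed
  show ?thesis unfolding mink_mean_curv_def
    apply (rule exI[of _ "\<lambda>q. vector [fst q * cos v - x * sin v * snd q, fst q * sin v + x * cos v * snd q, d * fst q]"])
    apply (rule exI[of _ "\<lambda>q. vector [- L' * fst q * cos v + Lf m u x * sin v * snd q, - L' * fst q * sin v - Lf m u x * cos v * snd q, E' * fst q]"])
    apply (rule exI[of _ "- L'"], rule exI[of _ 0], rule exI[of _ 0], rule exI[of _ "- Lf m u x / x"])
    using Df Deta EE xp by (simp add: vec_eq_iff forall_3 vector_3 field_simps)
qed

lemma FL:
  assumes m: "m \<ge> 1" and oJ: "open J" and J: "J \<subseteq> {0<..}" and hu: "\<forall>a\<in>J. (u has_real_derivative deriv u a) (at a)"
    and hd: "\<forall>a\<in>J. deriv u a \<noteq> 0" and x: "x \<in> J"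
    and MC: "mink_mean_curv (fbar u) (rot_eta m u) (x, 0) Hv"
  shows "\<exists>L'. (Lf m u has_real_derivative L') (at x) \<and> Hv = (- L' - Lf m u x / x) / 2"
proof -
  note RJ = rot_eta_J[OF m J hu hd]
  have xp: "x > 0" using x J by auto
  define d where "d = deriv u x"
  obtain Df Deta a11 a12 a21 a22 where
    hDf: "(fbar u has_derivative Df) (at (x, 0))" and hDeta: "(rot_eta m u has_derivative Deta) (at (x, 0))"
    and e1: "Deta (1,0) = a11 *\<^sub>R Df (1,0) + a21 *\<^sub>R Df (0,1)"
    and e2: "Deta (0,1) = a12 *\<^sub>R Df (1,0) + a22 *\<^sub>R Df (0,1)"
    and Hv: "Hv = (a11 + a22) / 2"
    using MC unfolding mink_mean_curv_def by blast
  have Dfe: "Df = (\<lambda>q. vector [fst q * cos 0 - x * sin 0 * snd q, fst q * sin 0 + x * cos 0 * snd q, d * fst q])"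
    using has_derivative_unique[OF hDf fbar_hasderiv[of u d x 0]] hu x d_def by auto
  have Df1: "Df (1,0) = vector [1, 0, d]" and Df2: "Df (0,1) = vector [0, x, 0]" unfolding Dfe by simp_all
  have hp: "((\<lambda>a. (a, 0::real)) has_derivative (\<lambda>h. (h, 0))) (at x)"
    by (rule has_derivative_Pair[OF has_derivative_ident has_derivative_const])
  have c1: "((\<lambda>a. rot_eta m u (a, 0)) has_derivative (\<lambda>h. Deta (h, 0))) (at x)"
    using has_derivative_compose[OF hp, of "rot_eta m u" Deta] hDeta by simp
  have c1': "((\<lambda>a. rot_eta m u (a, 0) $ 1) has_derivative (\<lambda>h. Deta (h, 0) $ 1)) (at x)"
    using bounded_linear.has_derivative[OF bounded_linear_vec_nth c1] .
  have lin: "linear Deta" using has_derivative_bounded_linear[OF hDeta] bounded_linear.linear by blast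
  define c where "c = Deta (1,0) $ 1"
  have sc: "\<And>h. Deta (h, 0) $ 1 = c * h"
  proof -
    fix h :: real
    have "Deta (h, 0) = Deta (h *\<^sub>R (1, 0))" by simp
    also have "\<dots> = h *\<^sub>R Deta (1, 0)" using lin by (rule linear_scale)
    finally show "Deta (h, 0) $ 1 = c * h" unfolding c_def by simp
  qed
  have "(\<lambda>h. Deta (h, 0) $ 1) = (*) c" by (rule ext) (simp add: sc)
  hence c1'': "((\<lambda>a. rot_eta m u (a, 0) $ 1) has_real_derivative c) (at x)"
    using c1' by (simp add: has_field_derivative_def)
  have LD: "(Lf m u has_real_derivative - c) (at x)"
  proof (rule has_field_derivative_transform_within_open[OF DERIV_minus[OF c1''] oJ x])
    fix a assume "a \<in> J" thus "- (rot_eta m u (a, 0) $ 1) = Lf m u a" using RJ(1)[of a 0] by (simp add: vector_3)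
  qed
  have hp2: "((\<lambda>w. (x, w)) has_derivative (\<lambda>k. (0, k))) (at (0::real))"
    by (rule has_derivative_Pair[OF has_derivative_const has_derivative_ident])
  have c2: "((\<lambda>w. rot_eta m u (x, w)) has_derivative (\<lambda>k. Deta (0, k))) (at 0)"
    using has_derivative_compose[OF hp2, of "rot_eta m u" Deta] hDeta by simp
  have fe: "(\<lambda>w. rot_eta m u (x, w)) = (\<lambda>w. vector [- Lf m u x * cos w, - Lf m u x * sin w, Ef m u x])"
    using RJ(1)[OF x] by auto
  have c3v: "((\<lambda>w. vector [- Lf m u x * cos w, - Lf m u x * sin w, Ef m u x] :: real^3) has_vector_derivative vector [0, - Lf m u x, 0]) (at 0)"
    unfolding vec3_decomp
    by (rule derivative_eq_intros refl | simp)+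
  have "(\<lambda>k. Deta (0, k)) = (\<lambda>k. k *\<^sub>R vector [0, - Lf m u x, 0])"
    using has_derivative_unique[OF c2[unfolded fe] c3v[unfolded has_vector_derivative_def]] .
  hence De2: "Deta (0,1) = vector [0, - Lf m u x, 0]" by (metis scaleR_one)
  have "a11 = c" using arg_cong[OF e1, of "\<lambda>v. v $ 1"] Df1 Df2 c_def by (simp add: vector_3)
  moreover have "a12 = 0" using arg_cong[OF e2, of "\<lambda>v. v $ 1"] Df1 Df2 De2 by (simp add: vector_3)
  moreover have "- Lf m u x = a22 * x" using arg_cong[OF e2, of "\<lambda>v. v $ 2"] Df1 Df2 De2 calculation(2) by (simp add: vector_3)
  moreover have "a22 = - Lf m u x / x" using calculation(3) xp by (simp add: field_simps)
  ultimately have "Hv = (- (- c) - Lf m u x / x) / 2" using Hv by simp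
  thus ?thesis using LD by blast
qed

lemma pw:
  assumes m: "m \<ge> 1" and y: "(y::real) > 0"
  shows "(y^(2*m)) powr ((2 * real m - 1) / (2 * real m)) = y^(2*m-1)"
proof -
  have "(y^(2*m)) powr ((2 * real m - 1) / (2 * real m)) = (y powr (real (2*m))) powr ((2 * real m - 1) / (2 * real m))"
    using powr_realpow[OF y, of "2*m"] by simp
  also have "\<dots> = y powr (real (2*m-1))" using m by (simp add: powr_powr of_nat_diff)
  also have "\<dots> = y^(2*m-1)" using y by (simp add: powr_realpow)
  finally show ?thesis .
qed

lemma odd_pow_sgn:
  assumes "odd n" shows "(e::real)^n = sgn e * \<bar>e\<bar>^n"
proof (cases "e \<ge> 0")
  case True thus ?thesis using assms odd_pos[OF assms] by (cases "e = 0") (auto simp: sgn_if)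
next
  case False
  hence "e^n = - ((-e)^n)" using assms by simp
  thus ?thesis using False by (simp add: sgn_if)
qed

lemma formula_fw:
  assumes m: "m \<ge> 1" and x: "x > 0" and q: "Qsol m d l e"
  shows "x * l > 0 \<and> x^(2*m) > (x*l)^(2*m) \<and>
    d = sgn d * (x*l)^(2*m-1) / (x^(2*m) - (x*l)^(2*m)) powr ((2 * real m - 1) / (2 * real m))"
proof -
  from q have l: "l > 0" and s: "l^(2*m) + e^(2*m) = 1" and p: "e^(2*m-1) * d = l^(2*m-1)"
    unfolding Qsol_def by auto
  have lp: "l^(2*m-1) > 0" using l by simp
  have n0: "2*m-1 \<noteq> 0" using m by simp
  have e0: "e \<noteq> 0"
  proof
    assume "e = 0" hence "e^(2*m-1) = 0" using n0 by simp
    hence "l^(2*m-1) = 0" using p by (metis mult_zero_left)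
    thus False using lp by linarith
  qed
  have d0: "d \<noteq> 0"
  proof
    assume "d = 0" hence "l^(2*m-1) = 0" using p by simp
    thus False using lp by linarith
  qed
  have dd: "d = l^(2*m-1) / e^(2*m-1)" using p e0 by (simp add: field_simps)
  have ep: "e^(2*m) > 0" using e0 by (simp add: zero_less_power_eq)
  have D: "x^(2*m) - (x*l)^(2*m) = (x * \<bar>e\<bar>)^(2*m)"
  proof -
    have "x^(2*m) - (x*l)^(2*m) = x^(2*m) * (1 - l^(2*m))" by (simp add: power_mult_distrib right_diff_distrib)
    also have "1 - l^(2*m) = e^(2*m)" using s by simp
    also have "x^(2*m) * e^(2*m) = (x * \<bar>e\<bar>)^(2*m)" by (simp add: power_mult_distrib power_even_abs)
    finally show ?thesis .
  qed
  have P: "(x^(2*m) - (x*l)^(2*m)) powr ((2 * real m - 1) / (2 * real m)) = (x * \<bar>e\<bar>)^(2*m-1)"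
    unfolding D using pw[OF m, of "x * \<bar>e\<bar>"] x e0 by simp
  have sg: "sgn d = sgn e"
  proof -
    have "sgn (e^(2*m-1)) * sgn d = 1" using p lp by (metis sgn_mult sgn_pos)
    moreover have "sgn (e^(2*m-1)) = sgn e" by (subst odd_pow_sgn[OF odd2m[OF m]]) (simp add: sgn_mult e0)
    ultimately show ?thesis using e0 d0 by (auto simp: sgn_if split: if_splits)
  qed
  have "sgn d * (x*l)^(2*m-1) / (x * \<bar>e\<bar>)^(2*m-1) = l^(2*m-1) / (sgn e * \<bar>e\<bar>^(2*m-1))"
    using x e0 sg by (simp add: power_mult_distrib sgn_if)
  also have "\<dots> = d" using dd odd_pow_sgn[OF odd2m[OF m], of e] by simp
  finally have F: "d = sgn d * (x*l)^(2*m-1) / (x^(2*m) - (x*l)^(2*m)) powr ((2 * real m - 1) / (2 * real m))"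
    unfolding P by simp
  have "x^(2*m) - (x*l)^(2*m) > 0" unfolding D using x e0 by simp
  thus ?thesis using F x l by simp
qed

lemma formula_bw:
  assumes m: "m \<ge> 1" and x: "x > 0" and A: "A > 0" and xA: "x^(2*m) > A^(2*m)" and s: "s \<in> {-1, 1::real}"
    and d: "d = s * A^(2*m-1) / (x^(2*m) - A^(2*m)) powr ((2 * real m - 1) / (2 * real m))"
  shows "Qsol m d (A/x) (s * (1 - (A/x)^(2*m)) powr (1 / (2 * real m)))"
proof -
  define l where "l = A / x"
  define B where "B = 1 - l^(2*m)"
  define q where "q = (2 * real m - 1) / (2 * real m)"
  have l: "l > 0" using A x by (simp add: l_def)
  have xp: "x^(2*m) > 0" using x by simp
  have lA: "l^(2*m) = A^(2*m) / x^(2*m)" by (simp add: l_def power_divide)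
  have B: "B > 0" unfolding B_def lA using xA xp by (simp add: field_simps)
  define W where "W = B powr (1 / (2 * real m))"
  have W: "W > 0" using B by (simp add: W_def)
  have W2: "W^(2*m) = B"
  proof -
    have "W^(2*m) = W powr (real (2*m))" using powr_realpow[OF W, of "2*m"] by simp
    also have "\<dots> = B" using B m by (simp add: W_def powr_powr)
    finally show ?thesis .
  qed
  have W1: "W^(2*m-1) = B powr q"
  proof -
    have "W^(2*m-1) = W powr (real (2*m-1))" using powr_realpow[OF W, of "2*m-1"] by simp
    also have "\<dots> = B powr q" using B m by (simp add: W_def powr_powr q_def of_nat_diff)
    finally show ?thesis .
  qed
  have XB: "x^(2*m) - A^(2*m) = x^(2*m) * B" unfolding B_def lA using xp x by (simp add: field_simps)
  have P: "(x^(2*m) - A^(2*m)) powr q = x^(2*m-1) * B powr q"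
    unfolding XB using pw[OF m x] xp B by (simp add: powr_mult q_def)
  have s2: "s^2 = 1" using s by auto
  have s2m: "s^(2*m) = 1" using s2 by (simp add: power_mult)
  have s2m1: "s^(2*m-1) * s = 1"
  proof -
    have "s^(2*m-1) * s = s^(Suc (2*m-1))" by simp
    also have "Suc (2*m-1) = 2*m" using m by simp
    finally show ?thesis using s2m by simp
  qed
  have Bq: "B powr q > 0" using B by simp
  have "l^(2*m) + (s * W)^(2*m) = 1" using W2 s2m by (simp add: power_mult_distrib B_def)
  moreover have "(s * W)^(2*m-1) * d = l^(2*m-1)"
  proof -
    have sw: "(s * W)^(2*m-1) = s^(2*m-1) * B powr q" by (simp only: power_mult_distrib W1)
    have "(s * W)^(2*m-1) * d = (s^(2*m-1) * s) * (B powr q * A^(2*m-1) / (x^(2*m-1) * B powr q))"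
      unfolding d q_def[symmetric] P sw by simp
    also have "\<dots> = A^(2*m-1) / x^(2*m-1)" using Bq s2m1 by simp
    also have "\<dots> = l^(2*m-1)" by (simp add: l_def power_divide)
    finally show ?thesis .
  qed
  ultimately show ?thesis using l unfolding Qsol_def l_def W_def B_def by simp
qed

lemma sign_const_aux:
  fixes f :: "real \<Rightarrow> real"
  assumes J: "is_interval J" and c: "\<forall>x\<in>J. isCont f x" and nz: "\<forall>x\<in>J. f x \<noteq> 0"
    and a: "a \<in> J" and b: "b \<in> J" and ab: "a \<le> b"
  shows "sgn (f a) = sgn (f b)"
proof -
  have sub: "\<forall>x. a \<le> x \<and> x \<le> b \<longrightarrow> x \<in> J" using J a b unfolding is_interval_1 by blast
  have cc: "\<forall>x. a \<le> x \<and> x \<le> b \<longrightarrow> isCont f x" using sub c by blast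
  have "\<not> (f a < 0 \<and> f b > 0)"
  proof
    assume "f a < 0 \<and> f b > 0"
    then obtain x where "a \<le> x" "x \<le> b" "f x = 0" using IVT[of f a 0 b] ab cc by auto
    thus False using sub nz by auto
  qed
  moreover have "\<not> (f a > 0 \<and> f b < 0)"
  proof
    assume "f a > 0 \<and> f b < 0"
    then obtain x where "a \<le> x" "x \<le> b" "f x = 0" using IVT2[of f b 0 a] ab cc by auto
    thus False using sub nz by auto
  qed
  moreover have "f a \<noteq> 0" "f b \<noteq> 0" using nz a b by auto
  ultimately have "(f a > 0 \<and> f b > 0) \<or> (f a < 0 \<and> f b < 0)" by linarith
  thus ?thesis by auto
qed

lemma sign_const:
  fixes f :: "real \<Rightarrow> real"
  assumes J: "is_interval J" and c: "\<forall>x\<in>J. isCont f x" and nz: "\<forall>x\<in>J. f x \<noteq> 0"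
    and a: "a \<in> J" and b: "b \<in> J"
  shows "sgn (f a) = sgn (f b)"
proof (cases "a \<le> b")
  case True thus ?thesis using sign_const_aux[OF J c nz a b] by blast
next
  case False thus ?thesis using sign_const_aux[OF J c nz b a] by simp
qed




theorem theorem6p1:
  fixes m :: nat and H :: real and J :: "real set" and u :: "real \<Rightarrow> real"
  assumes "m \<ge> 2" and "H \<noteq> 0"
    and "open J" and "is_interval J" and "J \<noteq> {}" and "J \<subseteq> {0<..}"
    and "\<forall>k. \<forall>x\<in>J. ((deriv ^^ k) u) differentiable (at x)"
    and "\<forall>x\<in>J. deriv u x \<noteq> 0"
  shows "(\<forall>p\<in>J \<times> UNIV. mink_mean_curv (fbar u) (rot_eta m u) p H) \<longleftrightarrow>
    (\<exists>c1. \<exists>s\<in>{-1, 1::real}. \<forall>x\<in>J.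
        c1 - H * x^2 > 0 \<and> x^(2*m) > (c1 - H * x^2)^(2*m) \<and>
        deriv u x = s * (c1 - H * x^2)^(2*m - 1) /
          (x^(2*m) - (c1 - H * x^2)^(2*m)) powr ((2 * real m - 1) / (2 * real m)))"
proof -
  have m: "m \<ge> 1" using assms(1) by simp
  note oJ = assms(3) and iJ = assms(4) and J0 = assms(6) and hd = assms(8)
  have hu: "\<forall>a\<in>J. (u has_real_derivative deriv u a) (at a)"
  proof
    fix a assume a: "a \<in> J"
    have "((deriv ^^ 0) u) differentiable (at a)" using assms(7) a by blast
    thus "(u has_real_derivative deriv u a) (at a)" by (simp add: DERIV_deriv_iff_real_differentiable)
  qed
  have cont: "\<forall>a\<in>J. isCont (deriv u) a"
  proof
    fix a assume a: "a \<in> J"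
    have "((deriv ^^ 1) u) differentiable (at a)" using assms(7) a by blast
    thus "isCont (deriv u) a" by (simp add: differentiable_imp_continuous_within)
  qed
  note RJ = rot_eta_J[OF m J0 hu hd]
  obtain x0 where x0: "x0 \<in> J" using assms(5) by blast
  define s where "s = sgn (deriv u x0)"
  have sJ: "\<forall>x\<in>J. sgn (deriv u x) = s" unfolding s_def using sign_const[OF iJ cont hd _ x0] by blast
  have s01: "s \<in> {-1, 1}" using hd x0 by (auto simp: s_def sgn_if)
  show ?thesis
  proof
    assume MC: "\<forall>p\<in>J \<times> UNIV. mink_mean_curv (fbar u) (rot_eta m u) p H"
    have LD: "(Lf m u has_real_derivative (- 2 * H - Lf m u x / x)) (at x)" if x: "x \<in> J" for x
    proof -
      obtain L' where L': "(Lf m u has_real_derivative L') (at x)" "H = (- L' - Lf m u x / x) / 2"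
        using FL[OF m oJ J0 hu hd x, of H] MC x by auto
      have "L' = - 2 * H - Lf m u x / x" using L'(2) by simp
      thus ?thesis using L'(1) by simp
    qed
    define g where "g a = a * Lf m u a + H * a^2" for a
    have gD: "(g has_real_derivative 0) (at x within J)" if x: "x \<in> J" for x
    proof -
      have xp: "x > 0" using x J0 by auto
      have "(g has_real_derivative 0) (at x)"
        unfolding g_def
        apply (rule derivative_eq_intros LD[OF x] refl)+
        using xp by (simp add: field_simps)
      thus ?thesis by (rule has_field_derivative_at_within)
    qed
    obtain c where c: "\<forall>x\<in>J. g x = c"
      using has_field_derivative_zero_constant[OF is_interval_convex[OF iJ] gD] by blast
    show "\<exists>c1. \<exists>s\<in>{-1, 1::real}. \<forall>x\<in>J.
        c1 - H * x^2 > 0 \<and> x^(2*m) > (c1 - H * x^2)^(2*m) \<and>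
        deriv u x = s * (c1 - H * x^2)^(2*m - 1) /
          (x^(2*m) - (c1 - H * x^2)^(2*m)) powr ((2 * real m - 1) / (2 * real m))"
    proof (intro exI[of _ c] bexI[OF _ s01] ballI)
      fix x assume x: "x \<in> J"
      have xp: "x > 0" using x J0 by auto
      have A: "x * Lf m u x = c - H * x^2" using c x unfolding g_def by force
      show "c - H * x^2 > 0 \<and> x^(2*m) > (c - H * x^2)^(2*m) \<and>
        deriv u x = s * (c - H * x^2)^(2*m - 1) /
          (x^(2*m) - (c - H * x^2)^(2*m)) powr ((2 * real m - 1) / (2 * real m))"
        using formula_fw[OF m xp RJ(2)[OF x]] sJ x unfolding A by simp
    qed
  next
    assume "\<exists>c1. \<exists>s\<in>{-1, 1::real}. \<forall>x\<in>J.
        c1 - H * x^2 > 0 \<and> x^(2*m) > (c1 - H * x^2)^(2*m) \<and>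
        deriv u x = s * (c1 - H * x^2)^(2*m - 1) /
          (x^(2*m) - (c1 - H * x^2)^(2*m)) powr ((2 * real m - 1) / (2 * real m))"
    then obtain c1 s' where s': "s' \<in> {-1, 1::real}" and C: "\<forall>x\<in>J.
        c1 - H * x^2 > 0 \<and> x^(2*m) > (c1 - H * x^2)^(2*m) \<and>
        deriv u x = s' * (c1 - H * x^2)^(2*m - 1) /
          (x^(2*m) - (c1 - H * x^2)^(2*m)) powr ((2 * real m - 1) / (2 * real m))" by blast
    define L0 where "L0 a = c1 / a - H * a" for a
    define E0 where "E0 a = s' * (1 - L0 a ^ (2*m)) powr (1 / (2 * real m))" for a
    have LE0: "Lf m u a = L0 a \<and> Ef m u a = E0 a" if a: "a \<in> J" for a
    proof -
      have ap: "a > 0" using a J0 by auto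
      have "L0 a = (c1 - H * a^2) / a" using ap by (simp add: L0_def field_simps power2_eq_square)
      hence Q: "Qsol m (deriv u a) (L0 a) (E0 a)"
        unfolding E0_def using formula_bw[OF m ap _ _ s'] C a by simp
      show ?thesis using Qsol_uniq[OF m RJ(2)[OF a] Q] .
    qed
    show "\<forall>p\<in>J \<times> UNIV. mink_mean_curv (fbar u) (rot_eta m u) p H"
    proof
      fix p assume "p \<in> J \<times> (UNIV :: real set)"
      then obtain x v where p: "p = (x, v)" and x: "x \<in> J" by auto
      have xp: "x > 0" using x J0 by auto
      have LD0: "(L0 has_real_derivative (- c1 / x^2 - H)) (at x)"
        unfolding L0_def[abs_def]
        using xp by (auto intro!: derivative_eq_intros simp: field_simps power2_eq_square)
      have B: "1 - L0 x ^ (2*m) > 0"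
      proof -
        have "L0 x = (c1 - H * x^2) / x" using xp by (simp add: L0_def field_simps power2_eq_square)
        hence Lp: "L0 x ^ (2*m) = (c1 - H * x^2)^(2*m) / x^(2*m)" by (simp add: power_divide)
        have lt: "(c1 - H * x^2)^(2*m) < x^(2*m)" using C x by blast
        have "x^(2*m) > 0" using xp by simp
        hence "L0 x ^ (2*m) < 1" unfolding Lp using lt by simp
        thus ?thesis by simp
      qed
      obtain E' where ED0: "(E0 has_real_derivative E') (at x)"
      proof -
        obtain D where D: "((\<lambda>a. 1 - L0 a ^ (2*m)) has_real_derivative D) (at x)"
          using DERIV_diff[OF DERIV_const DERIV_power[OF LD0]] by blast
        have "(E0 has_real_derivative (s' * ((1 / (2 * real m)) * (1 - L0 x ^ (2*m)) powr (1 / (2 * real m) - of_nat 1) * D))) (at x)"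
          unfolding E0_def[abs_def] by (rule DERIV_cmult[OF DERIV_fun_powr[OF D B]])
        thus ?thesis using that by blast
      qed
      have LD: "(Lf m u has_real_derivative (- c1 / x^2 - H)) (at x)"
        by (rule has_field_derivative_transform_within_open[OF LD0 oJ x]) (use LE0 in auto)
      have ED: "(Ef m u has_real_derivative E') (at x)"
        by (rule has_field_derivative_transform_within_open[OF ED0 oJ x]) (use LE0 in auto)
      have e: "Lf m u x = c1 / x - H * x" using LE0[OF x] by (simp add: L0_def)
      have eq: "(- (- c1 / x^2 - H) - Lf m u x / x) / 2 = H"
        unfolding e using xp by (simp add: field_simps power2_eq_square)
      have "mink_mean_curv (fbar u) (rot_eta m u) (x, v) ((- (- c1 / x^2 - H) - Lf m u x / x) / 2)"
        by (rule BL[OF m oJ J0 hu hd x LD ED])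
      thus "mink_mean_curv (fbar u) (rot_eta m u) p H" unfolding p eq .
    qed
  qed
qed

end
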